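(* For integers $a_1\ge a_2\ge1$, \[ F(a_1+1,a_2-1,0)\ge F(a_1,a_2,0), \] unless $a_1$ is even and $a_2=1$.
   Context: Let $a_1,a_2,s$ be nonnegative integers and $a=a_1+a_2$. $F(a_1,a_2,s)$ is the number of pairs $(X,w)$ where $X\subseteq[a]$ has $|X|=a-s$ (so $F=0$ if $s>a$) and $w=(w_1,\dots,w_a)$ is a sequence listing each element of $X\cup\{a+1,\dots,a+s\}$ exactly once, such that if one rearranges $w_1,\dots,w_{a_1}$ in decreasing order and $w_{a_1+1},\dots,w_a$ in decreasing order, the resulting sequence $u$ satisfies $u_i\ne i$ for all $i\in[a]$. (For $s=0$, $F(a_1,a_2,0)$ is the number of permutations of $[a]$ which have no fixed point after sorting positions $1,\dots,a_1$ and positions $a_1+1,\dots,a$ each into decreasing order.) *)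

theory Defs
  imports Main
begin

text \<open>The sequence u: positions 1..a1 of w sorted decreasingly, then positions
  a1+1..a sorted decreasingly. Lists are 0-indexed, so position i (1-based) is index i-1.\<close>
definition sortblocks :: "nat \<Rightarrow> nat list \<Rightarrow> nat list" where
  "sortblocks a1 w = rev (sort (take a1 w)) @ rev (sort (drop a1 w))"

definition Fpairs :: "nat \<Rightarrow> nat \<Rightarrow> nat \<Rightarrow> (nat set \<times> nat list) set" where
  "Fpairs a1 a2 s = {(X, w).
     s \<le> a1 + a2 \<and>
     X \<subseteq> {1..a1 + a2} \<and> card X = a1 + a2 - s \<and>
     length w = a1 + a2 \<and> distinct w \<and> set w = X \<union> {a1 + a2 + 1..a1 + a2 + s} \<and>
     (\<forall>i\<in>{1..a1 + a2}. sortblocks a1 w ! (i - 1) \<noteq> i)}"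

definition F :: "nat \<Rightarrow> nat \<Rightarrow> nat \<Rightarrow> nat" where
  "F a1 a2 s = card (Fpairs a1 a2 s)"

end

theory Submission
  imports Defs "HOL-Combinatorics.Multiset_Permutations"
begin


definition cT :: "bool list \<Rightarrow> nat \<Rightarrow> nat" where
  "cT bs k = length (filter id (drop k bs))"
definition cF :: "bool list \<Rightarrow> nat \<Rightarrow> nat" where
  "cF bs k = length (filter Not (drop k bs))"
definition fp1 :: "bool list \<Rightarrow> nat \<Rightarrow> bool" where
  "fp1 bs k \<longleftrightarrow> k < length bs \<and> bs ! k \<and> cT bs k = Suc k"
definition fp2 :: "bool list \<Rightarrow> nat \<Rightarrow> bool" where
  "fp2 bs k \<longleftrightarrow> k < length bs \<and> \<not> bs ! k \<and> cT bs 0 + cF bs k = Suc k"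
definition del :: "nat \<Rightarrow> bool list \<Rightarrow> bool list" where
  "del k bs = take k bs @ drop (Suc k) bs"
definition ins :: "nat \<Rightarrow> bool \<Rightarrow> bool list \<Rightarrow> bool list" where
  "ins k b bs = take k bs @ b # drop k bs"

lemma cT_step: "k < length bs \<Longrightarrow> cT bs k = (if bs ! k then 1 else 0) + cT bs (Suc k)"
  unfolding cT_def by (simp add: Cons_nth_drop_Suc[symmetric])
lemma cF_step: "k < length bs \<Longrightarrow> cF bs k = (if bs ! k then 0 else 1) + cF bs (Suc k)"
  unfolding cF_def by (simp add: Cons_nth_drop_Suc[symmetric])
lemma cT_ge: "length bs \<le> k \<Longrightarrow> cT bs k = 0"
  unfolding cT_def by simp
lemma cF_ge: "length bs \<le> k \<Longrightarrow> cF bs k = 0"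
  unfolding cF_def by simp

lemma cT_mono: "j \<le> k \<Longrightarrow> cT bs k \<le> cT bs j"
proof (induction k rule: dec_induct)
  case (step k)
  then show ?case
    by (cases "k < length bs") (auto simp: cT_step cT_ge)
qed simp
lemma cF_mono: "j \<le> k \<Longrightarrow> cF bs k \<le> cF bs j"
proof (induction k rule: dec_induct)
  case (step k)
  then show ?case
    by (cases "k < length bs") (auto simp: cF_step cF_ge)
qed simp

lemma fp1_unique: "fp1 bs k \<Longrightarrow> fp1 bs j \<Longrightarrow> k = j"
  unfolding fp1_def using cT_mono[of k j bs] cT_mono[of j k bs] by (cases "k \<le> j") auto

lemma del_length: "k < length bs \<Longrightarrow> length (del k bs) = length bs - 1"
  unfolding del_def by simp
lemma del_nth1: "j < k \<Longrightarrow> k < length bs \<Longrightarrow> del k bs ! j = bs ! j"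
  unfolding del_def by (simp add: nth_append)
lemma del_nth2: "k \<le> j \<Longrightarrow> Suc j < length bs \<Longrightarrow> del k bs ! j = bs ! Suc j"
  unfolding del_def by (simp add: nth_append)

lemma drop_split: "j \<le> k \<Longrightarrow> drop j bs = drop j (take k bs) @ drop k bs"
proof -
  assume "j \<le> k"
  have "drop j bs = drop j (take k bs @ drop k bs)" by simp
  also have "\<dots> = drop j (take k bs) @ drop (j - length (take k bs)) (drop k bs)"
    by (rule drop_append)
  also have "\<dots> = drop j (take k bs) @ drop k bs"
    using \<open>j \<le> k\<close> by (cases "k \<le> length bs") auto
  finally show ?thesis .
qed

lemma cT_del1: "j \<le> k \<Longrightarrow> k < length bs \<Longrightarrow> cT bs j = cT (del k bs) j + (if bs ! k then 1 else 0)"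
proof -
  assume a: "j \<le> k" "k < length bs"
  have "drop j (del k bs) = drop j (take k bs) @ drop (Suc k) bs"
    using a unfolding del_def by simp
  moreover have "drop j bs = drop j (take k bs) @ bs ! k # drop (Suc k) bs"
    using a drop_split[of j k bs] by (simp add: Cons_nth_drop_Suc)
  ultimately show ?thesis unfolding cT_def by simp
qed
lemma cF_del1: "j \<le> k \<Longrightarrow> k < length bs \<Longrightarrow> cF bs j = cF (del k bs) j + (if bs ! k then 0 else 1)"
proof -
  assume a: "j \<le> k" "k < length bs"
  have "drop j (del k bs) = drop j (take k bs) @ drop (Suc k) bs"
    using a unfolding del_def by simp
  moreover have "drop j bs = drop j (take k bs) @ bs ! k # drop (Suc k) bs"
    using a drop_split[of j k bs] by (simp add: Cons_nth_drop_Suc)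
  ultimately show ?thesis unfolding cF_def by simp
qed
lemma cT_del2: "k \<le> j \<Longrightarrow> k < length bs \<Longrightarrow> cT (del k bs) j = cT bs (Suc j)"
  unfolding cT_def del_def by simp
lemma cF_del2: "k \<le> j \<Longrightarrow> k < length bs \<Longrightarrow> cF (del k bs) j = cF bs (Suc j)"
  unfolding cF_def del_def by simp

lemma ins_length: "k \<le> length v \<Longrightarrow> length (ins k b v) = Suc (length v)"
  unfolding ins_def by simp
lemma ins_nth: "k \<le> length v \<Longrightarrow> ins k b v ! k = b"
  unfolding ins_def by (simp add: nth_append)
lemma del_ins: "k \<le> length v \<Longrightarrow> del k (ins k b v) = v"
  unfolding ins_def del_def by simp
lemma ins_del: "k < length bs \<Longrightarrow> ins k (bs ! k) (del k bs) = bs"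
  unfolding ins_def del_def by (simp add: id_take_nth_drop[symmetric])



lemma fp1_del_none:
  assumes "fp1 bs k" shows "\<not> fp1 (del k bs) j"
proof
  assume h: "fp1 (del k bs) j"
  have k: "k < length bs" "bs ! k" "cT bs k = Suc k" using assms fp1_def by auto
  have jl: "j < length bs - 1" using h k del_length[of k bs] unfolding fp1_def by simp
  show False
  proof (cases "j < k")
    case True
    have "del k bs ! j" using h fp1_def by auto
    hence bj: "bs ! j" using del_nth1[OF True k(1)] by simp
    have "cT bs j = cT (del k bs) j + 1" using cT_del1[of j k bs] True k by simp
    moreover have "cT bs j = 1 + cT bs (Suc j)" using cT_step[of j bs] bj True k by simp
    moreover have "cT bs k \<le> cT bs (Suc j)" using cT_mono[of "Suc j" k bs] True by simp
    ultimately show False using h k True unfolding fp1_def by simp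
  next
    case False
    have "cT (del k bs) j = cT bs (Suc j)" using cT_del2[of k j bs] False k by simp
    moreover have "cT bs (Suc j) \<le> cT bs (Suc k)" using cT_mono[of "Suc k" "Suc j" bs] False by simp
    moreover have "cT bs k = 1 + cT bs (Suc k)" using cT_step[of k bs] k by simp
    ultimately show False using h k False unfolding fp1_def by simp
  qed
qed

lemma fp2_del:
  assumes "fp1 bs k" shows "(\<exists>j. fp2 bs j) \<longleftrightarrow> (\<exists>j. fp2 (del k bs) j)"
proof -
  have k: "k < length bs" "bs ! k" "cT bs k = Suc k" using assms fp1_def by auto
  have c0: "cT bs 0 = cT (del k bs) 0 + 1" using cT_del1[of 0 k bs] k by simp
  have c0k: "cT bs k \<le> cT bs 0" using cT_mono[of 0 k bs] by simp
  show ?thesis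
  proof
    assume "\<exists>j. fp2 bs j"
    then obtain j where j: "fp2 bs j" by auto
    have jl: "j < length bs" "\<not> bs ! j" "cT bs 0 + cF bs j = Suc j" using j fp2_def by auto
    have "cF bs j \<ge> 1" using cF_step[of j bs] jl by simp
    hence jk: "k < j" using jl c0k k by simp
    then obtain i where i: "j = Suc i" by (cases j) auto
    have "fp2 (del k bs) i"
      unfolding fp2_def
      using jl jk i del_length[of k bs] del_nth2[of k i bs] cF_del2[of k i bs] c0 k by auto
    thus "\<exists>j. fp2 (del k bs) j" by auto
  next
    assume "\<exists>j. fp2 (del k bs) j"
    then obtain j where j: "fp2 (del k bs) j" by auto
    have jl: "j < length bs - 1" "\<not> del k bs ! j" "cT (del k bs) 0 + cF (del k bs) j = Suc j"
      using j fp2_def del_length[of k bs] k by auto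
    show "\<exists>j. fp2 bs j"
    proof (cases "j < k")
      case True
      have "cF bs j = cF (del k bs) j" using cF_del1[of j k bs] True k by simp
      moreover have "cF bs j \<ge> 1" using cF_step[of j bs] jl True k del_nth1[of j k bs] by simp
      ultimately show ?thesis using jl c0 c0k k True by simp
    next
      case False
      have "fp2 bs (Suc j)"
        unfolding fp2_def
        using jl False del_nth2[of k j bs] cF_del2[of k j bs] c0 k by auto
      thus ?thesis by auto
    qed
  qed
qed

lemma z_unique: "cT v k = k \<Longrightarrow> cT v j = j \<Longrightarrow> k = j"
  using cT_mono[of k j v] cT_mono[of j k v] by (cases "k \<le> j") auto

lemma z_exists:
  assumes "\<forall>j. \<not> fp1 v j" shows "\<exists>k \<le> length v. cT v k = k"
proof -
  have ex: "\<exists>k. cT v k \<le> k" using cT_ge[of v "length v"] by (intro exI[of _ "length v"]) auto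
  define k0 where "k0 = (LEAST k. cT v k \<le> k)"
  have k0: "cT v k0 \<le> k0" unfolding k0_def using LeastI_ex[OF ex] .
  have k0l: "k0 \<le> length v"
    unfolding k0_def using Least_le[of "\<lambda>k. cT v k \<le> k" "length v"] cT_ge[of v "length v"] by simp
  show ?thesis
  proof (cases k0)
    case 0
    then show ?thesis using k0 by (intro exI[of _ 0]) auto
  next
    case (Suc j)
    have jgt: "\<not> cT v j \<le> j" using not_less_Least[of j "\<lambda>k. cT v k \<le> k"] Suc k0_def by simp
    have jl: "j < length v" using jgt cT_ge[of v j] by (cases "j < length v") auto
    show ?thesis
    proof (cases "cT v k0 = k0")
      case True then show ?thesis using k0l by auto
    next
      case False
      have st: "cT v j = (if v ! j then 1 else 0) + cT v (Suc j)" using cT_step[OF jl] .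
      hence "v ! j" "cT v j = Suc j" using False k0 Suc jgt by (auto split: if_splits)
      hence "fp1 v j" using jl fp1_def by auto
      then show ?thesis using assms by auto
    qed
  qed
qed

lemma fp1_ins: "k \<le> length v \<Longrightarrow> cT v k = k \<Longrightarrow> fp1 (ins k True v) k"
proof -
  assume a: "k \<le> length v" "cT v k = k"
  let ?b = "ins k True v"
  have l: "length ?b = Suc (length v)" using ins_length a by simp
  have n: "?b ! k" using ins_nth a by simp
  have "cT ?b k = cT (del k ?b) k + 1" using cT_del1[of k k ?b] l a n by simp
  thus ?thesis using del_ins[OF a(1)] a l n unfolding fp1_def by simp
qed

lemma del_z: "fp1 bs k \<Longrightarrow> cT (del k bs) k = k \<and> k \<le> length (del k bs)"
  using cT_del1[of k k bs] del_length[of k bs] unfolding fp1_def by auto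

definition W :: "nat \<Rightarrow> nat \<Rightarrow> bool list set" where
  "W m n = {bs. length bs = m + n \<and> cT bs 0 = m}"
definition S :: "nat \<Rightarrow> nat \<Rightarrow> bool \<Rightarrow> bool \<Rightarrow> bool list set" where
  "S m n e1 e2 = {bs \<in> W m n. (\<exists>k. fp1 bs k) = e1 \<and> (\<exists>k. fp2 bs k) = e2}"
definition fpi :: "bool list \<Rightarrow> nat" where "fpi bs = (THE k. fp1 bs k)"
definition zi :: "bool list \<Rightarrow> nat" where "zi v = (THE k. k \<le> length v \<and> cT v k = k)"

lemma fpi: "fp1 bs k \<Longrightarrow> fpi bs = k"
  unfolding fpi_def using fp1_unique by blast
lemma zi: "k \<le> length v \<Longrightarrow> cT v k = k \<Longrightarrow> zi v = k"
  unfolding zi_def using z_unique by blast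

lemma L1: "bij_betw (\<lambda>bs. del (fpi bs) bs) (S (Suc m) n True e) (S m n False e)"
proof (rule bij_betw_byWitness[where f' = "\<lambda>v. ins (zi v) True v"])
  show "\<forall>a\<in>S (Suc m) n True e. ins (zi (del (fpi a) a)) True (del (fpi a) a) = a"
  proof
    fix bs assume "bs \<in> S (Suc m) n True e"
    then obtain k where k: "fp1 bs k" unfolding S_def by auto
    have "zi (del k bs) = k" using del_z[OF k] zi by blast
    thus "ins (zi (del (fpi bs) bs)) True (del (fpi bs) bs) = bs"
      using fpi[OF k] ins_del[of k bs] k unfolding fp1_def by auto
  qed
  show "\<forall>v\<in>S m n False e. del (fpi (ins (zi v) True v)) (ins (zi v) True v) = v"
  proof
    fix v assume v: "v \<in> S m n False e"
    have "\<forall>j. \<not> fp1 v j" using v unfolding S_def by auto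
    then obtain k where k: "k \<le> length v" "cT v k = k" using z_exists by blast
    have "zi v = k" using zi k by blast
    thus "del (fpi (ins (zi v) True v)) (ins (zi v) True v) = v"
      using fpi[OF fp1_ins[OF k]] del_ins[OF k(1)] by simp
  qed
  show "(\<lambda>bs. del (fpi bs) bs) ` S (Suc m) n True e \<subseteq> S m n False e"
  proof
    fix v assume "v \<in> (\<lambda>bs. del (fpi bs) bs) ` S (Suc m) n True e"
    then obtain bs where bs: "bs \<in> S (Suc m) n True e" "v = del (fpi bs) bs" by auto
    then obtain k where k: "fp1 bs k" unfolding S_def by auto
    have v: "v = del k bs" using bs fpi[OF k] by simp
    have kl: "k < length bs" "bs ! k" using k fp1_def by auto
    have "cT bs 0 = cT v 0 + 1" using cT_del1[of 0 k bs] kl v by simp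
    moreover have "length v = length bs - 1" using del_length kl v by simp
    moreover note fp1_del_none[OF k] fp2_del[OF k]
    ultimately show "v \<in> S m n False e" using bs v unfolding S_def W_def by auto
  qed
  show "(\<lambda>v. ins (zi v) True v) ` S m n False e \<subseteq> S (Suc m) n True e"
  proof
    fix bs assume "bs \<in> (\<lambda>v. ins (zi v) True v) ` S m n False e"
    then obtain v where v: "v \<in> S m n False e" "bs = ins (zi v) True v" by auto
    have "\<forall>j. \<not> fp1 v j" using v unfolding S_def by auto
    then obtain k where k: "k \<le> length v" "cT v k = k" using z_exists by blast
    have b: "bs = ins k True v" using v zi[OF k] by simp
    have f: "fp1 bs k" using fp1_ins[OF k] b by simp
    have dv: "del k bs = v" using b del_ins k by simp
    have kl: "k < length bs" "bs ! k" using f fp1_def by auto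
    have "cT bs 0 = cT v 0 + 1" using cT_del1[of 0 k bs] kl dv by simp
    moreover have "length bs = Suc (length v)" using ins_length k b by simp
    moreover note fp2_del[OF f]
    ultimately show "bs \<in> S (Suc m) n True e" using v f dv unfolding S_def W_def by auto
  qed
qed



definition sg :: "bool list \<Rightarrow> bool list" where "sg bs = rev (map Not bs)"

lemma sg_sg[simp]: "sg (sg bs) = bs" unfolding sg_def by (simp add: rev_map comp_def)
lemma sg_length[simp]: "length (sg bs) = length bs" unfolding sg_def by simp

lemma cT_sg0: "cT (sg bs) 0 = length bs - cT bs 0"
proof -
  have "cT (sg bs) 0 = length (filter Not bs)"
    unfolding cT_def sg_def by (simp add: rev_filter[symmetric] filter_map comp_def)
  moreover have "length (filter id bs) + length (filter Not bs) = length bs"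
    using sum_length_filter_compl[of id bs] by (simp add: comp_def)
  ultimately show ?thesis unfolding cT_def by simp
qed

lemma tT_cT: "length (filter id (take i bs)) + cT bs i = cT bs 0"
  unfolding cT_def by (metis append_take_drop_id drop_0 filter_append length_append)

lemma cF_sg: "j \<le> length bs \<Longrightarrow> cF (sg bs) j = length (filter id (take (length bs - j) bs))"
proof -
  assume j: "j \<le> length bs"
  have "drop j (rev (map Not bs)) = rev (take (length bs - j) (map Not bs))"
    using rev_take[of "length bs - j" "map Not bs"] j by simp
  thus ?thesis unfolding cF_def sg_def
    by (simp add: rev_filter[symmetric] filter_map comp_def take_map id_def)
qed

lemma fp1_sg: "k < length bs \<Longrightarrow> fp1 bs k \<longleftrightarrow> fp2 (sg bs) (length bs - Suc k)"
proof -
  assume k: "k < length bs"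
  define L where "L = length bs"
  define j where "j = length bs - Suc k"
  define c0 where "c0 = cT bs 0"
  define c1 where "c1 = cT bs (Suc k)"
  have n: "sg bs ! j = (\<not> bs ! k)" unfolding sg_def j_def using k by (simp add: rev_nth)
  have c: "cF (sg bs) j = c0 - c1"
    using cF_sg[of j bs] k tT_cT[of "Suc k" bs] unfolding j_def c0_def c1_def by (simp add: Suc_diff_Suc)
  have le: "c1 \<le> c0" using cT_mono[of 0 "Suc k" bs] unfolding c0_def c1_def by simp
  have le2: "c0 \<le> L" unfolding cT_def c0_def L_def by simp
  have le3: "c1 \<le> L - Suc k" unfolding cT_def c1_def L_def
    by (metis length_drop length_filter_le)
  have st: "cT bs k = (if bs ! k then 1 else 0) + c1" using cT_step k unfolding c1_def by simp
  have c00: "cT (sg bs) 0 = L - c0" using cT_sg0[of bs] unfolding L_def c0_def by simp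
  have jL: "j < L" "Suc j = L - k" using k unfolding j_def L_def by auto
  have "fp1 bs k \<longleftrightarrow> bs ! k \<and> c1 = k" unfolding fp1_def using k st by auto
  moreover have "fp2 (sg bs) j \<longleftrightarrow> bs ! k \<and> L - c0 + (c0 - c1) = L - k"
    unfolding fp2_def using n c c00 jL L_def by auto
  moreover have "L - c0 + (c0 - c1) = L - k \<longleftrightarrow> c1 = k" using le le2 le3 jL by linarith
  ultimately show ?thesis unfolding j_def by simp
qed

lemma ex_fp1_sg: "(\<exists>k. fp1 bs k) \<longleftrightarrow> (\<exists>j. fp2 (sg bs) j)"
proof
  assume "\<exists>k. fp1 bs k"
  then obtain k where k: "fp1 bs k" by auto
  hence "k < length bs" using fp1_def by auto
  thus "\<exists>j. fp2 (sg bs) j" using fp1_sg k by auto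
next
  assume "\<exists>j. fp2 (sg bs) j"
  then obtain j where j: "fp2 (sg bs) j" by auto
  hence jl: "j < length bs" using fp2_def by auto
  define k where "k = length bs - Suc j"
  have kl: "k < length bs" "length bs - Suc k = j" using jl unfolding k_def by auto
  have "fp1 bs k" using fp1_sg[OF kl(1)] kl(2) j by simp
  thus "\<exists>k. fp1 bs k" by blast
qed

lemma ex_fp2_sg: "(\<exists>k. fp2 bs k) \<longleftrightarrow> (\<exists>j. fp1 (sg bs) j)"
  using ex_fp1_sg[of "sg bs"] by simp

lemma sg_W: "bs \<in> W m n \<Longrightarrow> sg bs \<in> W n m"
  unfolding W_def using cT_sg0[of bs] by auto

lemma sg_S: "bs \<in> S m n e1 e2 \<Longrightarrow> sg bs \<in> S n m e2 e1"
proof -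
  assume a: "bs \<in> S m n e1 e2"
  hence "sg bs \<in> W n m" using sg_W unfolding S_def by blast
  moreover have "(\<exists>k. fp1 (sg bs) k) = e2" using a ex_fp2_sg[of bs] unfolding S_def by blast
  moreover have "(\<exists>k. fp2 (sg bs) k) = e1" using a ex_fp1_sg[of bs] unfolding S_def by blast
  ultimately show ?thesis unfolding S_def by blast
qed

lemma L2: "card (S m n e1 e2) = card (S n m e2 e1)"
proof -
  have "bij_betw sg (S m n e1 e2) (S n m e2 e1)"
  proof (rule bij_betw_byWitness[where f' = sg])
    show "sg ` S m n e1 e2 \<subseteq> S n m e2 e1" using sg_S by blast
    show "sg ` S n m e2 e1 \<subseteq> S m n e1 e2" using sg_S by blast
  qed auto
  thus ?thesis by (rule bij_betw_same_card)
qed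


lemma card_words: "card {bs. length bs = L \<and> cT bs 0 = m} = L choose m"
proof (induction L arbitrary: m)
  case 0
  have "{bs. length bs = 0 \<and> cT bs 0 = m} = (if m = 0 then {[]} else {})"
    unfolding cT_def by auto
  then show ?case by simp
next
  case (Suc L)
  have cc: "cT (b # bs) 0 = (if b then 1 else 0) + cT bs 0" for b bs
    unfolding cT_def by simp
  show ?case
  proof (cases m)
    case 0
    have "{bs. length bs = Suc L \<and> cT bs 0 = m} = Cons False ` {bs. length bs = L \<and> cT bs 0 = 0}"
      using 0 cc by (auto simp: length_Suc_conv split: if_splits)
    then show ?thesis using Suc.IH[of 0] 0 by (simp add: card_image)
  next
    case (Suc m')
    have "{bs. length bs = Suc L \<and> cT bs 0 = m} =
       Cons True ` {bs. length bs = L \<and> cT bs 0 = m'} \<union> Cons False ` {bs. length bs = L \<and> cT bs 0 = m}"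
      using Suc cc by (auto simp: length_Suc_conv split: if_splits)
    moreover have "card (Cons True ` {bs. length bs = L \<and> cT bs 0 = m'} \<union> Cons False ` {bs. length bs = L \<and> cT bs 0 = m})
       = card (Cons True ` {bs. length bs = L \<and> cT bs 0 = m'}) + card (Cons False ` {bs. length bs = L \<and> cT bs 0 = m})"
    proof (rule card_Un_disjoint)
      have "finite {bs :: bool list. length bs = L}"
        using finite_lists_length_eq[of "UNIV :: bool set" L] by simp
      thus "finite (Cons True ` {bs. length bs = L \<and> cT bs 0 = m'})"
           "finite (Cons False ` {bs. length bs = L \<and> cT bs 0 = m})"
        by (auto intro: finite_subset)
    qed auto
    ultimately show ?thesis using Suc.IH[of m'] Suc.IH[of m] Suc by (simp add: card_image)
  qed
qed

lemma finite_W: "finite (W m n)"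
proof -
  have "finite {bs :: bool list. length bs = m + n}"
    using finite_lists_length_eq[of "UNIV :: bool set" "m+n"] by simp
  thus ?thesis unfolding W_def by (auto intro: finite_subset)
qed

lemma card_W: "card (W m n) = (m + n) choose m"
  unfolding W_def using card_words by simp

lemma partition:
  "card (W m n) = card (S m n False False) + card (S m n True False) + card (S m n False True) + card (S m n True True)"
proof -
  have fin: "finite (S m n e1 e2)" for e1 e2 using finite_W unfolding S_def by auto
  have "W m n = ((S m n False False \<union> S m n True False) \<union> S m n False True) \<union> S m n True True"
    unfolding S_def by auto
  moreover have "card (((S m n False False \<union> S m n True False) \<union> S m n False True) \<union> S m n True True)
      = card (S m n False False) + card (S m n True False) + card (S m n False True) + card (S m n True True)"
    apply (subst card_Un_disjoint, simp_all add: fin, (auto simp: S_def)[1])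
    apply (subst card_Un_disjoint, simp_all add: fin, (auto simp: S_def)[1])
    apply (subst card_Un_disjoint, simp_all add: fin, (auto simp: S_def)[1])
    done
  ultimately show ?thesis by simp
qed

lemma S0: "S 0 n True e = {}"
proof -
  have "\<not> fp1 bs k" if "cT bs 0 = 0" for bs k
    using that cT_mono[of 0 k bs] unfolding fp1_def by auto
  thus ?thesis unfolding S_def W_def by auto
qed

lemma S_Suc: "card (S (Suc m) n True e) = card (S m n False e)"
  using bij_betw_same_card[OF L1] .

definition Nc :: "nat \<Rightarrow> nat \<Rightarrow> nat" where "Nc m n = card (S m n False False)"

lemma Nc_sym: "Nc m n = Nc n m" unfolding Nc_def using L2 by simp

fun Ne :: "nat \<Rightarrow> nat \<Rightarrow> int" where
  "Ne (Suc m) (Suc n) = int (Nc m n)"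
| "Ne _ _ = 0"

lemma Ne_sym: "Ne m n = Ne n m"
  by (cases m; cases n) (auto simp: Nc_sym)

lemma TF: "int (card (S m n True False)) = Ne m (Suc n)"
  by (cases m) (auto simp: S0 S_Suc Nc_def)
lemma FT: "int (card (S m n False True)) = Ne (Suc m) n"
proof -
  have "card (S m n False True) = card (S n m True False)" using L2 by simp
  thus ?thesis using TF[of n m] Ne_sym by simp
qed
lemma TT: "int (card (S m n True True)) = Ne m n"
proof (cases m)
  case 0 then show ?thesis by (simp add: S0)
next
  case (Suc m')
  have "card (S m n True True) = card (S m' n False True)" using S_Suc Suc by simp
  then show ?thesis using FT[of m' n] Suc
    by (cases n) (simp_all add: Nc_sym)
qed

lemma four_term: "Ne (Suc m) (Suc n) + Ne m (Suc n) + Ne (Suc m) n + Ne m n = int ((m + n) choose m)"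
  using partition[of m n] card_W[of m n] TF[of m n] FT[of m n] TT[of m n]
  by (simp add: Nc_def)



locale NE =
  fixes E :: "nat \<Rightarrow> nat \<Rightarrow> int"
  assumes E0: "E 0 n = 0" and E0': "E m 0 = 0"
    and four: "E (Suc m) (Suc n) + E m (Suc n) + E (Suc m) n + E m n = int ((m + n) choose m)"
    and sym: "E m n = E n m"
begin

lemma E1: "2 * E 1 n = 1 - (-1) ^ n"
proof (induction n)
  case 0 then show ?case by (simp add: E0')
next
  case (Suc n)
  have "E 1 (Suc n) + E 1 n = 1" using four[of 0 n] by (simp add: E0)
  then show ?case using Suc by simp
qed

lemma signed: "E (Suc m) (Suc n) = E m (Suc n) + E (Suc m) n + (-1) ^ (m + n)"
proof (induction "m + n" arbitrary: m n rule: less_induct)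
  case less
  show ?case
  proof (cases m)
    case 0
    have "E 1 (Suc n) + E 1 n = 1" using four[of 0 n] by (simp add: E0)
    then show ?thesis using 0 E1[of n] by (simp add: E0)
  next
    case (Suc m')
    show ?thesis
    proof (cases n)
      case 0
      have "E (Suc m) 1 + E m 1 = 1" using four[of m 0] by (simp add: E0')
      moreover have "2 * E (Suc m) 1 = 1 + (-1) ^ m" using E1[of "Suc m"] sym[of "Suc m" 1] by simp
      moreover have "2 * E m 1 = 1 - (-1) ^ m" using E1[of m] sym[of m 1] by simp
      ultimately show ?thesis using 0 Suc by (simp add: E0')
    next
      case (Suc n')
      note mS = \<open>m = Suc m'\<close>
      have i1: "E m (Suc n) = E m' (Suc n) + E m n + (-1) ^ (m' + n)"
        using less(1)[of m' n] mS by simp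
      have i2: "E (Suc m) n = E m n + E (Suc m) n' + (-1) ^ (m + n')"
        using less(1)[of m n'] Suc by simp
      have i3: "E m n = E m' n + E m n' + (-1) ^ (m' + n')"
        using less(1)[of m' n'] Suc mS by simp
      have f1: "E (Suc m) (Suc n) + E m (Suc n) + E (Suc m) n + E m n = int ((m + n) choose m)"
        using four .
      have f2: "E m (Suc n) + E m' (Suc n) + E m n + E m' n = int ((m' + n) choose m')"
        using four[of m' n] mS by simp
      have f3: "E (Suc m) n + E m n + E (Suc m) n' + E m n' = int ((m + n') choose m)"
        using four[of m n'] Suc by simp
      have pas: "(m + n) choose m = ((m' + n) choose m') + ((m + n') choose m)"
        using mS Suc by simp
      have s1: "(-1::int) ^ (m' + n) = - ((-1) ^ (m + n))" using mS by simp
      have s2: "(-1::int) ^ (m + n') = - ((-1) ^ (m + n))" using Suc by simp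
      have s3: "(-1::int) ^ (m' + n') = (-1) ^ (m + n)" using Suc mS by simp
      show ?thesis using i1 i2 i3 f1 f2 f3 pas s1 s2 s3 by simp
    qed
  qed
qed

definition D :: "nat \<Rightarrow> nat \<Rightarrow> int" where
  "D p q = int (p + 1) * E (p + 2) q - int q * E (p + 1) (q + 1)"

lemma Drec: "D (Suc p) (Suc q) = D p (Suc q) + D (Suc p) q + (int p + 1 - int q) * (-1) ^ (p + q)"
proof -
  have a: "E (Suc p + 2) (Suc q) = E (Suc p + 1) (Suc q) + E (Suc p + 2) q + (-1) ^ (p + q)"
    using signed[of "Suc p + 1" q] by simp
  have b: "E (Suc p + 1) (Suc q + 1) = E (Suc p) (Suc q + 1) + E (Suc p + 1) (Suc q) + (-1) ^ (p + q)"
    using signed[of "Suc p" "Suc q"] by simp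
  show ?thesis unfolding D_def using a b
    by (simp add: algebra_simps)
qed

lemma Dsym: "D q (Suc q) = 0"
  unfolding D_def using sym[of "q+2" "Suc q"] by (simp add: algebra_simps)

lemma Dq0: "D p 0 = 0" unfolding D_def by (simp add: E0')

lemma ee: "2 * Suc k = 2 * k + 2" "2 * Suc k + 1 = 2 * k + 3" by simp_all

lemma nn: "2 * k + 1 = Suc (2 * k)" "2 * k + 2 = Suc (Suc (2 * k))" "2 * k + 3 = Suc (Suc (Suc (2 * k)))"
  by simp_all

lemma pm1[simp]: "(-1::int) ^ (k + k) = 1"
  by (metis mult_2 power_minus1_even)

lemma Drow1: "D (2 * k) 1 = - int k \<and> D (2 * k + 1) 1 = int k + 1"
proof (induction k)
  case 0
  have "D 0 1 = 0" using Dsym[of 0] by simp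
  moreover have "D 1 1 = D 0 1 + D 1 0 + 1" using Drec[of 0 0] by simp
  ultimately show ?case by (simp add: Dq0)
next
  case (Suc k)
  have a: "D (2 * k + 2) 1 = D (2 * k + 1) 1 + (int (2 * k + 1) + 1) * (-1)"
    using Drec[of "2 * k + 1" 0] by (simp add: Dq0)
  have b: "D (2 * k + 3) 1 = D (2 * k + 2) 1 + (int (2 * k + 2) + 1)"
    using Drec[of "2 * k + 2" 0] by (simp add: Dq0 numeral_3_eq_3)
  show ?case using a b Suc by (simp add: numeral_3_eq_3)
qed

lemma base_vals: "E 1 1 = 1" "E 1 2 = 0" "E 1 3 = 1" "E 1 4 = 0" "E 2 2 = 1" "E 2 3 = 1"
proof -
  show e11: "E 1 1 = 1" using four[of 0 0] by (simp add: E0 E0')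
  show e12: "E 1 2 = 0" using four[of 0 1] e11 by (simp add: E0 numeral_2_eq_2)
  show e13: "E 1 3 = 1" using four[of 0 2] e12 by (simp add: E0 numeral_3_eq_3)
  show "E 1 4 = 0" using four[of 0 3] e13 by (simp add: E0 eval_nat_numeral)
  have e21: "E 2 1 = 0" using e12 sym by simp
  show e22: "E 2 2 = 1" using four[of 1 1] e11 e12 e21 by (simp add: eval_nat_numeral)
  show "E 2 3 = 1" using four[of 1 2] e13 e22 e12 by (simp add: eval_nat_numeral)
qed

lemma Drow2: "D (2 * k) 2 = int k - 1 \<and> D (2 * k + 1) 2 = 0"
proof (induction k)
  case 0
  have "D 0 2 = E 2 2 - 2 * E 1 3" unfolding D_def by (simp add: eval_nat_numeral)
  hence d02: "D 0 2 = -1" using base_vals by simp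
  moreover have "D 1 2 = D 0 2 + D 1 1" using Drec[of 0 1] by (simp add: eval_nat_numeral)
  moreover have "D 1 1 = 1" using Drow1[of 0] by simp
  ultimately show ?case by simp
next
  case (Suc k)
  have a: "D (2 * k + 2) 2 = D (2 * k + 1) 2 + D (2 * k + 2) 1 + (int (2 * k + 1)) * 1"
    using Drec[of "2 * k + 1" 1] by (simp add: numeral_2_eq_2)
  have b: "D (2 * k + 3) 2 = D (2 * k + 2) 2 + D (2 * k + 3) 1 + (int (2 * k + 2)) * (-1)"
    using Drec[of "2 * k + 2" 1] by (simp add: numeral_2_eq_2 numeral_3_eq_3)
  have c: "D (2 * k + 2) 1 = - int (k + 1)" "D (2 * k + 3) 1 = int (k + 1) + 1"
    using Drow1[of "Suc k", unfolded ee] by (simp_all add: numeral_3_eq_3)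
  show ?case unfolding ee using a b c Suc.IH by (simp only: nn) simp
qed

lemma Drow3: "2 * D (2 * k) 3 = (int k - 1) * (int k - 2) \<and> 2 * D (2 * k + 1) 3 = int k * (int k + 1)"
proof (induction k)
  case 0
  have "D 0 3 = E 2 3 - 3 * E 1 4" unfolding D_def by (simp add: numeral_2_eq_2)
  hence d03: "D 0 3 = 1" using base_vals by simp
  moreover have "D 1 3 = D 0 3 + D 1 2 - 1" using Drec[of 0 2] by (simp add: eval_nat_numeral)
  moreover have "D 1 2 = 0" using Drow2[of 0] by simp
  ultimately show ?case by simp
next
  case (Suc k)
  have a: "D (2 * k + 2) 3 = D (2 * k + 1) 3 + D (2 * k + 2) 2 - 2 * int k"
    using Drec[of "2 * k + 1" 2] by (simp add: eval_nat_numeral power_minus1_even[of k, unfolded mult_2])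
  have b: "D (2 * k + 3) 3 = D (2 * k + 2) 3 + D (2 * k + 3) 2 + (2 * int k + 1)"
    using Drec[of "2 * k + 2" 2] by (simp add: eval_nat_numeral)
  have c: "D (2 * k + 2) 2 = int k" "D (2 * k + 3) 2 = 0"
    using Drow2[of "Suc k", unfolded ee] by (simp_all add: numeral_3_eq_3)
  show ?case unfolding ee using a b c Suc.IH by (simp only: nn) (simp add: algebra_simps)
qed

lemma Dmain: "2 \<le> q \<Longrightarrow> q \<le> p + 1 \<Longrightarrow> D p q \<ge> 0"
proof (induction "p + q" arbitrary: p q rule: less_induct)
  case less
  show ?case
  proof (cases "q = 2")
    case True
    then show ?thesis using Drow2[of "p div 2"] less(3)
      by (cases "even p") (auto elim!: evenE oddE)
  next
    case q2: False
    show ?thesis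
    proof (cases "q = 3")
      case True
      show ?thesis
      proof (cases "even p")
        case True
        then obtain k where k: "p = 2 * k" by auto
        have "1 \<le> k" using k less(3) \<open>q = 3\<close> by simp
        hence "(int k - 1) * (int k - 2) \<ge> 0"
          by (cases "k = 1") (auto intro: mult_nonneg_nonneg)
        then show ?thesis using Drow3[of k] k \<open>q = 3\<close> by simp
      next
        case False
        then obtain k where k: "p = 2 * k + 1" by (auto elim: oddE)
        have "int k * (int k + 1) \<ge> 0" by simp
        hence "2 * D p q \<ge> 0" using Drow3[of k] k \<open>q = 3\<close> by simp
        then show ?thesis by simp
      qed
    next
      case q3: False
      show ?thesis
      proof (cases "p + 1 = q")
        case True
        then show ?thesis using Dsym[of p] by simp
      next
        case False
        obtain p' where p': "p = Suc p'" using False less(3) q2 q3 less(2) by (cases p) auto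
        obtain q' where q': "q = Suc q'" using less(2) by (cases q) auto
        obtain q'' where q'': "q' = Suc q''" using less(2) q2 q' by (cases q') auto
        have ih1: "D p' (Suc q') \<ge> 0" using less(1)[of p' "Suc q'"] less(2,3) False p' q' by simp
        have ih2: "D (Suc p') q' \<ge> 0" using less(1)[of "Suc p'" q'] less(2,3) q2 q3 p' q' by simp
        have r1: "D (Suc p') (Suc q') = D p' (Suc q') + D (Suc p') q' + (int p' + 1 - int q') * (-1) ^ (p' + q')"
          by (rule Drec)
        show ?thesis
        proof (cases "even (p' + q')")
          case True
          have "int p' + 1 - int q' \<ge> 0" using less(3) False p' q' by simp
          then show ?thesis using r1 ih1 ih2 True p' q' by simp
        next
          case odd: False
          have r2: "D (Suc p') (Suc q'') = D p' (Suc q'') + D (Suc p') q'' + (int p' + 1 - int q'') * (-1) ^ (p' + q'')"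
            by (rule Drec)
          have ih3: "D p' q' \<ge> 0" using less(1)[of p' q'] less(2,3) q2 q3 False p' q' by simp
          have ih4: "D (Suc p') q'' \<ge> 0" using less(1)[of "Suc p'" q''] less(2,3) q2 q3 p' q' q'' by simp
          have s: "(-1::int) ^ (p' + q') = -1" "(-1::int) ^ (p' + q'') = 1"
            using odd q'' by auto
          show ?thesis using r1 r2 ih1 ih3 ih4 s p' q' q'' by simp
        qed
      qed
    qed
  qed
qed

lemma Dfinal: "a2 \<le> a1 \<Longrightarrow> 1 \<le> a2 \<Longrightarrow> \<not> (even a1 \<and> a2 = 1) \<Longrightarrow> D a1 a2 \<ge> 0"
proof (cases "a2 = 1")
  case True
  assume "\<not> (even a1 \<and> a2 = 1)"
  then obtain k where "a1 = 2 * k + 1" using True by (auto elim: oddE)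
  then show ?thesis using Drow1[of k] True by simp
next
  case False
  assume "a2 \<le> a1" "1 \<le> a2"
  then show ?thesis using Dmain[of a2 a1] False by simp
qed

end


lemma SL_aux:
  fixes xs :: "nat list"
  assumes "sorted_wrt (<) xs" "i < length xs"
  shows "{x \<in> set xs. x < xs ! i} = set (take i xs)"
proof -
  have "set (take i xs) = (!) xs ` {..<i}" using nth_image[of i xs] assms by (simp add: atLeast0LessThan)
  also have "\<dots> = {x \<in> set xs. x < xs ! i}"
  proof
    show "(!) xs ` {..<i} \<subseteq> {x \<in> set xs. x < xs ! i}"
      using assms sorted_wrt_iff_nth_less[of "(<)" xs] by auto
    show "{x \<in> set xs. x < xs ! i} \<subseteq> (!) xs ` {..<i}"
    proof
      fix x assume x: "x \<in> {x \<in> set xs. x < xs ! i}"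
      then obtain i' where i': "i' < length xs" "x = xs ! i'" by (auto simp: in_set_conv_nth)
      have "i' < i"
      proof (rule ccontr)
        assume "\<not> i' < i"
        hence "i \<le> i'" by simp
        have "xs ! i \<le> xs ! i'"
        proof (cases "i = i'")
          case False
          hence "i < i'" using \<open>i \<le> i'\<close> by simp
          thus ?thesis using sorted_wrt_nth_less[OF assms(1) _ i'(1), of i] by simp
        qed simp
        thus False using x i' by simp
      qed
      thus "x \<in> (!) xs ` {..<i}" using i' by auto
    qed
  qed
  finally show ?thesis by simp
qed

lemma SL:
  fixes S :: "nat set"
  assumes "finite S" "j < card S"
  shows "sorted_list_of_set S ! j = v \<longleftrightarrow> v \<in> S \<and> card {x \<in> S. x < v} = j"
proof -
  let ?xs = "sorted_list_of_set S"
  have ss: "sorted_wrt (<) ?xs" by simp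
  have st: "set ?xs = S" using assms by simp
  have len: "length ?xs = card S" by simp
  have dis: "distinct ?xs" by simp
  have key: "card {x \<in> S. x < ?xs ! i} = i" if "i < card S" for i
  proof -
    have "{x \<in> S. x < ?xs ! i} = set (take i ?xs)" using SL_aux[OF ss, of i] that st len by simp
    thus ?thesis using distinct_card[of "take i ?xs"] dis that len by simp
  qed
  show ?thesis
  proof
    assume "?xs ! j = v"
    thus "v \<in> S \<and> card {x \<in> S. x < v} = j" using key[OF assms(2)] st len assms(2) nth_mem[of j ?xs] by auto
  next
    assume v: "v \<in> S \<and> card {x \<in> S. x < v} = j"
    then obtain i where i: "i < card S" "?xs ! i = v" using st len by (metis in_set_conv_nth)
    thus "?xs ! j = v" using key[OF i(1)] v by simp
  qed
qed

lemma card_lt_ge: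
  fixes A :: "nat set"
  assumes "finite A"
  shows "card {x \<in> A. x < i} + card {x \<in> A. i \<le> x} = card A"
proof -
  have "A = {x \<in> A. x < i} \<union> {x \<in> A. i \<le> x}" by auto
  moreover have "card ({x \<in> A. x < i} \<union> {x \<in> A. i \<le> x}) = card {x \<in> A. x < i} + card {x \<in> A. i \<le> x}"
    by (rule card_Un_disjoint) (use assms in auto)
  ultimately show ?thesis by simp
qed

lemma rev_sl_fix:
  fixes A :: "nat set"
  assumes "finite A" "1 \<le> j" "j \<le> card A"
  shows "rev (sorted_list_of_set A) ! (j - 1) = v \<longleftrightarrow> v \<in> A \<and> card {x \<in> A. v \<le> x} = j"
proof -
  have "rev (sorted_list_of_set A) ! (j - 1) = sorted_list_of_set A ! (card A - j)"
    using assms by (simp add: rev_nth)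
  moreover have "sorted_list_of_set A ! (card A - j) = v \<longleftrightarrow> v \<in> A \<and> card {x \<in> A. x < v} = card A - j"
    using SL[of A "card A - j" v] assms by simp
  moreover have "card {x \<in> A. x < v} = card A - j \<longleftrightarrow> card {x \<in> A. v \<le> x} = j"
    using card_lt_ge[OF assms(1), of v] assms by linarith
  ultimately show ?thesis by simp
qed

definition wd :: "nat \<Rightarrow> nat set \<Rightarrow> bool list" where
  "wd a A = map (\<lambda>k. Suc k \<in> A) [0..<a]"

lemma wd_len[simp]: "length (wd a A) = a" unfolding wd_def by simp
lemma wd_nth: "k < a \<Longrightarrow> wd a A ! k = (Suc k \<in> A)" unfolding wd_def by simp

lemma count_Suc:
  fixes A :: "nat set"
  assumes "A \<subseteq> {1..a}"
  shows "length (filter (\<lambda>t. Suc t \<in> A) [k..<a]) = card {x \<in> A. Suc k \<le> x}"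
proof -
  have "length (filter (\<lambda>t. Suc t \<in> A) [k..<a]) = card ({t. Suc t \<in> A} \<inter> {k..<a})"
    using distinct_length_filter[of "[k..<a]" "\<lambda>t. Suc t \<in> A"] by simp
  also have "\<dots> = card (Suc ` ({t. Suc t \<in> A} \<inter> {k..<a}))" by (simp add: card_image)
  also have "Suc ` ({t. Suc t \<in> A} \<inter> {k..<a}) = {x \<in> A. Suc k \<le> x}"
  proof
    show "Suc ` ({t. Suc t \<in> A} \<inter> {k..<a}) \<subseteq> {x \<in> A. Suc k \<le> x}" by auto
    show "{x \<in> A. Suc k \<le> x} \<subseteq> Suc ` ({t. Suc t \<in> A} \<inter> {k..<a})"
    proof
      fix x assume x: "x \<in> {x \<in> A. Suc k \<le> x}"
      then obtain t where t: "x = Suc t" by (cases x) auto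
      have "x \<le> a" using x assms by auto
      thus "x \<in> Suc ` ({t. Suc t \<in> A} \<inter> {k..<a})" using x t by auto
    qed
  qed
  finally show ?thesis .
qed

lemma cT_wd: "A \<subseteq> {1..a} \<Longrightarrow> cT (wd a A) k = card {x \<in> A. Suc k \<le> x}"
  unfolding cT_def wd_def by (simp add: drop_map filter_map comp_def count_Suc)

lemma cF_wd: "A \<subseteq> {1..a} \<Longrightarrow> cF (wd a A) k = card {x \<in> {1..a} - A. Suc k \<le> x}"
proof -
  assume "A \<subseteq> {1..a}"
  have "cF (wd a A) k = length (filter (\<lambda>t. Suc t \<notin> A) [k..<a])"
    unfolding cF_def wd_def by (simp add: drop_map filter_map comp_def)
  also have "\<dots> = length (filter (\<lambda>t. Suc t \<in> {1..a} - A) [k..<a])"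
    by (rule arg_cong[where f=length], rule filter_cong) auto
  also have "\<dots> = card {x \<in> {1..a} - A. Suc k \<le> x}" by (rule count_Suc) auto
  finally show ?thesis .
qed



definition uA :: "nat \<Rightarrow> nat \<Rightarrow> nat set \<Rightarrow> nat list" where
  "uA a1 a2 A = rev (sorted_list_of_set A) @ rev (sorted_list_of_set ({1..a1 + a2} - A))"
definition goodA :: "nat \<Rightarrow> nat \<Rightarrow> nat set \<Rightarrow> bool" where
  "goodA a1 a2 A \<longleftrightarrow> (\<forall>i\<in>{1..a1 + a2}. uA a1 a2 A ! (i - 1) \<noteq> i)"

lemma fixchar:
  assumes A: "A \<subseteq> {1..a1 + a2}" "card A = a1" and i: "i \<in> {1..a1 + a2}"
  shows "uA a1 a2 A ! (i - 1) = i \<longleftrightarrow>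
    (i \<le> a1 \<and> i \<in> A \<and> card {x \<in> A. i \<le> x} = i) \<or>
    (a1 < i \<and> i \<in> {1..a1 + a2} - A \<and> card {x \<in> {1..a1 + a2} - A. i \<le> x} = i - a1)"
proof -
  let ?B = "{1..a1 + a2} - A"
  have fA: "finite A" using A finite_subset by blast
  have cB: "card ?B = a2" using A by (simp add: card_Diff_subset fA)
  have lA: "length (rev (sorted_list_of_set A)) = a1" using A by simp
  show ?thesis
  proof (cases "i \<le> a1")
    case True
    have "uA a1 a2 A ! (i - 1) = rev (sorted_list_of_set A) ! (i - 1)"
      unfolding uA_def using True i lA by (simp add: nth_append)
    then show ?thesis using rev_sl_fix[OF fA, of i i] True i A by auto
  next
    case False
    have "uA a1 a2 A ! (i - 1) = rev (sorted_list_of_set ?B) ! ((i - a1) - 1)"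
      unfolding uA_def using False i lA by (simp add: nth_append)
    moreover have "rev (sorted_list_of_set ?B) ! ((i - a1) - 1) = i \<longleftrightarrow> i \<in> ?B \<and> card {x \<in> ?B. i \<le> x} = i - a1"
      by (rule rev_sl_fix) (use False i cB in auto)
    ultimately show ?thesis using False by auto
  qed
qed

lemma fp1_wd: "A \<subseteq> {1..a} \<Longrightarrow> fp1 (wd a A) k \<longleftrightarrow> k < a \<and> Suc k \<in> A \<and> card {x \<in> A. Suc k \<le> x} = Suc k"
  unfolding fp1_def using wd_nth[of k a A] cT_wd[of A a k] by auto

lemma cardA_ge1: "A \<subseteq> {1..a} \<Longrightarrow> {x \<in> A. Suc 0 \<le> x} = A" by auto

lemma fp2_wd: "A \<subseteq> {1..a} \<Longrightarrow> fp2 (wd a A) k \<longleftrightarrow>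
    k < a \<and> Suc k \<notin> A \<and> card A + card {x \<in> {1..a} - A. Suc k \<le> x} = Suc k"
  unfolding fp2_def using wd_nth[of k a A] cT_wd[of A a 0] cF_wd[of A a k] cardA_ge1[of A a] by auto

lemma goodA_iff:
  assumes A: "A \<subseteq> {1..a1 + a2}" "card A = a1"
  shows "goodA a1 a2 A \<longleftrightarrow> \<not> (\<exists>k. fp1 (wd (a1 + a2) A) k) \<and> \<not> (\<exists>k. fp2 (wd (a1 + a2) A) k)"
proof -
  let ?a = "a1 + a2" and ?B = "{1..a1 + a2} - A"
  have fA: "finite A" using A finite_subset by blast
  have "\<not> goodA a1 a2 A \<longleftrightarrow> (\<exists>k. fp1 (wd ?a A) k) \<or> (\<exists>k. fp2 (wd ?a A) k)"
  proof
    assume "\<not> goodA a1 a2 A"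
    then obtain i where i: "i \<in> {1..?a}" "uA a1 a2 A ! (i - 1) = i" unfolding goodA_def by auto
    then obtain k where k: "i = Suc k" by (cases i) auto
    show "(\<exists>k. fp1 (wd ?a A) k) \<or> (\<exists>k. fp2 (wd ?a A) k)"
    proof (cases "i \<le> a1")
      case True
      hence "i \<in> A \<and> card {x \<in> A. i \<le> x} = i" using fixchar[OF A i(1)] i(2) by auto
      hence "fp1 (wd ?a A) k" using fp1_wd[OF A(1)] i(1) k by auto
      thus ?thesis by auto
    next
      case False
      hence "i \<in> ?B \<and> card {x \<in> ?B. i \<le> x} = i - a1" using fixchar[OF A i(1)] i(2) by auto
      hence "fp2 (wd ?a A) k" using fp2_wd[OF A(1)] i(1) k A(2) False by auto
      thus ?thesis by auto
    qed
  next
    assume "(\<exists>k. fp1 (wd ?a A) k) \<or> (\<exists>k. fp2 (wd ?a A) k)"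
    thus "\<not> goodA a1 a2 A"
    proof
      assume "\<exists>k. fp1 (wd ?a A) k"
      then obtain k where k: "k < ?a" "Suc k \<in> A" "card {x \<in> A. Suc k \<le> x} = Suc k"
        using fp1_wd[OF A(1)] by auto
      have "card {x \<in> A. Suc k \<le> x} \<le> card A" by (rule card_mono) (use fA in auto)
      hence "Suc k \<le> a1" using k A by simp
      hence "uA a1 a2 A ! (Suc k - 1) = Suc k" using fixchar[OF A, of "Suc k"] k by auto
      moreover have "Suc k \<in> {1..?a}" using k by auto
      ultimately show ?thesis unfolding goodA_def by (metis diff_Suc_1)
    next
      assume "\<exists>k. fp2 (wd ?a A) k"
      then obtain k where k: "k < ?a" "Suc k \<notin> A" "a1 + card {x \<in> ?B. Suc k \<le> x} = Suc k"
        using fp2_wd[OF A(1)] A(2) by auto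
      have "Suc k \<in> {x \<in> ?B. Suc k \<le> x}" using k by auto
      moreover have "finite {x \<in> ?B. Suc k \<le> x}" by auto
      ultimately have "card {x \<in> ?B. Suc k \<le> x} \<ge> 1"
        by (metis One_nat_def Suc_leI card_gt_0_iff empty_iff)
      hence "a1 < Suc k" using k by simp
      hence "uA a1 a2 A ! (Suc k - 1) = Suc k" using fixchar[OF A, of "Suc k"] k by auto
      moreover have "Suc k \<in> {1..?a}" using k by auto
      ultimately show ?thesis unfolding goodA_def by (metis diff_Suc_1)
    qed
  qed
  thus ?thesis by blast
qed

definition GA :: "nat \<Rightarrow> nat \<Rightarrow> nat set set" where
  "GA a1 a2 = {A. A \<subseteq> {1..a1 + a2} \<and> card A = a1 \<and> goodA a1 a2 A}"

lemma card_GA: "card (GA a1 a2) = Nc a1 a2"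
proof -
  let ?a = "a1 + a2"
  have inj: "inj_on (wd ?a) (GA a1 a2)"
  proof
    fix A A' assume A: "A \<in> GA a1 a2" and A': "A' \<in> GA a1 a2" and e: "wd ?a A = wd ?a A'"
    have "x \<in> A \<longleftrightarrow> x \<in> A'" for x
    proof (cases "x \<in> {1..?a}")
      case True
      then obtain k where k: "x = Suc k" "k < ?a" by (cases x) auto
      then show ?thesis using e wd_nth[of k ?a A] wd_nth[of k ?a A'] by simp
    next
      case False
      then show ?thesis using A A' unfolding GA_def by auto
    qed
    thus "A = A'" by auto
  qed
  have img: "wd ?a ` GA a1 a2 = S a1 a2 False False"
  proof
    show "wd ?a ` GA a1 a2 \<subseteq> S a1 a2 False False"
    proof
      fix bs assume "bs \<in> wd ?a ` GA a1 a2"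
      then obtain A where A: "A \<in> GA a1 a2" "bs = wd ?a A" by auto
      have As: "A \<subseteq> {1..?a}" "card A = a1" "goodA a1 a2 A" using A unfolding GA_def by auto
      have "cT bs 0 = a1" using cT_wd[OF As(1), of 0] cardA_ge1[OF As(1)] As A by simp
      thus "bs \<in> S a1 a2 False False"
        using goodA_iff[OF As(1,2)] As A unfolding S_def W_def by auto
    qed
    show "S a1 a2 False False \<subseteq> wd ?a ` GA a1 a2"
    proof
      fix bs assume bs: "bs \<in> S a1 a2 False False"
      define A where "A = {x \<in> {1..?a}. bs ! (x - 1)}"
      have As: "A \<subseteq> {1..?a}" unfolding A_def by auto
      have len: "length bs = ?a" using bs unfolding S_def W_def by auto
      have wA: "wd ?a A = bs"
      proof (rule nth_equalityI)
        show "length (wd ?a A) = length bs" using len by simp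
        fix k assume "k < length (wd ?a A)"
        hence "k < ?a" by simp
        thus "wd ?a A ! k = bs ! k" using wd_nth[of k ?a A] unfolding A_def by auto
      qed
      have cA: "card A = a1"
        using cT_wd[OF As, of 0] cardA_ge1[OF As] wA bs unfolding S_def W_def by auto
      have "goodA a1 a2 A" using goodA_iff[OF As cA] wA bs unfolding S_def by auto
      hence "A \<in> GA a1 a2" using As cA unfolding GA_def by auto
      thus "bs \<in> wd ?a ` GA a1 a2" using wA by force
    qed
  qed
  have "card (GA a1 a2) = card (wd ?a ` GA a1 a2)" using card_image[OF inj] by simp
  thus ?thesis using img unfolding Nc_def by simp
qed



definition fib :: "nat \<Rightarrow> nat \<Rightarrow> nat set \<Rightarrow> nat list set" where
  "fib a1 a2 A = {w. length w = a1 + a2 \<and> distinct w \<and> set w = {1..a1 + a2} \<and> set (take a1 w) = A}"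

lemma card_fib:
  assumes A: "A \<subseteq> {1..a1 + a2}" "card A = a1"
  shows "card (fib a1 a2 A) = fact a1 * fact a2"
proof -
  let ?B = "{1..a1 + a2} - A"
  have fA: "finite A" using A finite_subset by blast
  have cB: "card ?B = a2" using A by (simp add: card_Diff_subset fA)
  let ?P = "permutations_of_set A \<times> permutations_of_set ?B"
  let ?f = "\<lambda>(xs, ys). xs @ ys"
  have inj: "inj_on ?f ?P"
  proof
    fix p q assume p: "p \<in> ?P" and q: "q \<in> ?P" and e: "?f p = ?f q"
    obtain xs ys where pp: "p = (xs, ys)" by (cases p)
    obtain xs' ys' where qq: "q = (xs', ys')" by (cases q)
    have "xs \<in> permutations_of_set A" "xs' \<in> permutations_of_set A" using p q pp qq by auto
    hence "length xs = length xs'" using length_finite_permutations_of_set by metis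
    thus "p = q" using e pp qq by simp
  qed
  have img: "?f ` ?P = fib a1 a2 A"
  proof
    show "?f ` ?P \<subseteq> fib a1 a2 A"
    proof
      fix w assume "w \<in> ?f ` ?P"
      then obtain xs ys where x: "xs \<in> permutations_of_set A" "ys \<in> permutations_of_set ?B" "w = xs @ ys"
        by auto
      have lx: "length xs = a1" "length ys = a2"
        using length_finite_permutations_of_set[OF x(1)] length_finite_permutations_of_set[OF x(2)] A cB by auto
      have sx: "set xs = A" "distinct xs" "set ys = ?B" "distinct ys"
        using x by (auto simp: permutations_of_set_def)
      show "w \<in> fib a1 a2 A" unfolding fib_def using lx sx x A by auto
    qed
    show "fib a1 a2 A \<subseteq> ?f ` ?P"
    proof
      fix w assume w: "w \<in> fib a1 a2 A"
      have w1: "length w = a1 + a2" "distinct w" "set w = {1..a1 + a2}" "set (take a1 w) = A"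
        using w unfolding fib_def by auto
      have d: "set (take a1 w) \<inter> set (drop a1 w) = {}"
        using set_take_disj_set_drop_if_distinct[OF w1(2), of a1 a1] by simp
      have u: "set (take a1 w) \<union> set (drop a1 w) = {1..a1 + a2}"
        using w1(3) by (metis append_take_drop_id set_append)
      have "set (drop a1 w) = ?B" using d u w1(4) by auto
      hence "drop a1 w \<in> permutations_of_set ?B" using w1(2) by (auto intro: distinct_drop)
      moreover have "take a1 w \<in> permutations_of_set A" using w1 by (auto intro: distinct_take)
      ultimately have "(take a1 w, drop a1 w) \<in> ?P" by simp
      thus "w \<in> ?f ` ?P" by (metis (no_types, lifting) append_take_drop_id case_prod_conv image_eqI)
    qed
  qed
  have "card (fib a1 a2 A) = card ?P" using card_image[OF inj] img by simp
  also have "\<dots> = fact a1 * fact a2" using fA cB A by (simp add: card_cartesian_product)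
  finally show ?thesis .
qed

definition PW :: "nat \<Rightarrow> nat \<Rightarrow> nat list set" where
  "PW a1 a2 = {w. length w = a1 + a2 \<and> distinct w \<and> set w = {1..a1 + a2} \<and>
     (\<forall>i\<in>{1..a1 + a2}. sortblocks a1 w ! (i - 1) \<noteq> i)}"

lemma sort_distinct: "distinct xs \<Longrightarrow> sort xs = sorted_list_of_set (set xs)"
  by (simp add: sorted_list_of_set_sort_remdups distinct_remdups_id)

lemma PW_UN: "PW a1 a2 = (\<Union>A\<in>GA a1 a2. fib a1 a2 A)"
proof -
  have key: "sortblocks a1 w = uA a1 a2 (set (take a1 w))"
    if w: "length w = a1 + a2" "distinct w" "set w = {1..a1 + a2}" for w
  proof -
    have d: "set (take a1 w) \<inter> set (drop a1 w) = {}"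
      using set_take_disj_set_drop_if_distinct[OF w(2), of a1 a1] by simp
    have u: "set (take a1 w) \<union> set (drop a1 w) = {1..a1 + a2}"
      using w(3) by (metis append_take_drop_id set_append)
    have "set (drop a1 w) = {1..a1 + a2} - set (take a1 w)" using d u by auto
    thus ?thesis unfolding sortblocks_def uA_def
      using sort_distinct[of "take a1 w"] sort_distinct[of "drop a1 w"] w(2)
      by (simp add: distinct_take distinct_drop)
  qed
  have cardT: "card (set (take a1 w)) = a1" if w: "length w = a1 + a2" "distinct w" for w
    using distinct_card[of "take a1 w"] w by (simp add: distinct_take)
  have subT: "set (take a1 w) \<subseteq> {1..a1 + a2}" if "set w = {1..a1 + a2}" for w
    using that set_take_subset[of a1 w] by simp
  show ?thesis
  proof
    show "PW a1 a2 \<subseteq> (\<Union>A\<in>GA a1 a2. fib a1 a2 A)"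
    proof
      fix w assume w: "w \<in> PW a1 a2"
      have w1: "length w = a1 + a2" "distinct w" "set w = {1..a1 + a2}"
        using w unfolding PW_def by auto
      have "goodA a1 a2 (set (take a1 w))"
        using w key[OF w1] unfolding PW_def goodA_def by auto
      hence "set (take a1 w) \<in> GA a1 a2" using cardT[OF w1(1,2)] subT[OF w1(3)] unfolding GA_def by auto
      moreover have "w \<in> fib a1 a2 (set (take a1 w))" using w1 unfolding fib_def by auto
      ultimately show "w \<in> (\<Union>A\<in>GA a1 a2. fib a1 a2 A)" by blast
    qed
    show "(\<Union>A\<in>GA a1 a2. fib a1 a2 A) \<subseteq> PW a1 a2"
    proof
      fix w assume "w \<in> (\<Union>A\<in>GA a1 a2. fib a1 a2 A)"
      then obtain A where A: "A \<in> GA a1 a2" "w \<in> fib a1 a2 A" by auto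
      have w1: "length w = a1 + a2" "distinct w" "set w = {1..a1 + a2}" "set (take a1 w) = A"
        using A unfolding fib_def by auto
      show "w \<in> PW a1 a2" using key[OF w1(1-3)] w1 A unfolding PW_def GA_def goodA_def by auto
    qed
  qed
qed

lemma card_PW: "card (PW a1 a2) = Nc a1 a2 * (fact a1 * fact a2)"
proof -
  have finGA: "finite (GA a1 a2)"
    by (rule finite_subset[of _ "Pow {1..a1 + a2}"]) (auto simp: GA_def)
  have finf: "finite (fib a1 a2 A)" for A
  proof (rule finite_subset)
    show "fib a1 a2 A \<subseteq> permutations_of_set {1..a1 + a2}"
      unfolding fib_def permutations_of_set_def by auto
  qed simp
  have "card (\<Union>A\<in>GA a1 a2. fib a1 a2 A) = (\<Sum>A\<in>GA a1 a2. card (fib a1 a2 A))"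
    by (rule card_UN_disjoint) (use finGA finf in \<open>auto simp: fib_def\<close>)
  also have "\<dots> = (\<Sum>A\<in>GA a1 a2. fact a1 * fact a2)"
    by (rule sum.cong) (auto simp: GA_def card_fib)
  also have "\<dots> = card (GA a1 a2) * (fact a1 * fact a2)" by simp
  finally show ?thesis using PW_UN card_GA by simp
qed

lemma F_formula: "F a1 a2 0 = Nc a1 a2 * (fact a1 * fact a2)"
proof -
  let ?a = "a1 + a2"
  have "Fpairs a1 a2 0 = (\<lambda>w. ({1..?a}, w)) ` PW a1 a2"
  proof
    show "Fpairs a1 a2 0 \<subseteq> (\<lambda>w. ({1..?a}, w)) ` PW a1 a2"
    proof
      fix p assume p: "p \<in> Fpairs a1 a2 0"
      obtain X w where pp: "p = (X, w)" by (cases p)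
      have h: "X \<subseteq> {1..?a}" "card X = ?a" "length w = ?a" "distinct w" "set w = X \<union> {?a + 1..?a + 0}"
        "\<forall>i\<in>{1..?a}. sortblocks a1 w ! (i - 1) \<noteq> i"
        using p pp unfolding Fpairs_def by auto
      have X: "X = {1..?a}" using card_subset_eq[of "{1..?a}" X] h by simp
      have "set w = {1..?a}" using h X by simp
      hence "w \<in> PW a1 a2" using h unfolding PW_def by auto
      thus "p \<in> (\<lambda>w. ({1..?a}, w)) ` PW a1 a2" using pp X by auto
    qed
    show "(\<lambda>w. ({1..?a}, w)) ` PW a1 a2 \<subseteq> Fpairs a1 a2 0"
      unfolding Fpairs_def PW_def by auto
  qed
  moreover have "inj_on (\<lambda>w. ({1..?a}, w)) (PW a1 a2)" by (auto intro: inj_onI)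
  ultimately have "card (Fpairs a1 a2 0) = card (PW a1 a2)" by (simp add: card_image)
  thus ?thesis unfolding F_def using card_PW by simp
qed

interpretation NE Ne
proof
  show "Ne 0 n = 0" for n by simp
  show "Ne m 0 = 0" for m by (cases m) simp_all
  show "Ne (Suc m) (Suc n) + Ne m (Suc n) + Ne (Suc m) n + Ne m n = int ((m + n) choose m)" for m n
    by (rule four_term)
  show "Ne m n = Ne n m" for m n by (rule Ne_sym)
qed

theorem mainTheorem15:
  fixes a1 a2 :: nat
  assumes "a1 \<ge> a2" and "a2 \<ge> 1"
    and "\<not> (even a1 \<and> a2 = 1)"
  shows "F (a1 + 1) (a2 - 1) 0 \<ge> F a1 a2 0"
proof -
  obtain b where b: "a2 = Suc b" using assms(2) by (cases a2) auto
  have "D a1 a2 \<ge> 0" using Dfinal assms by simp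
  hence "int (a1 + 1) * Ne (a1 + 2) a2 \<ge> int a2 * Ne (a1 + 1) (a2 + 1)" unfolding D_def by simp
  hence "int (a1 + 1) * int (Nc (a1 + 1) b) \<ge> int a2 * int (Nc a1 a2)" using b
    by (simp add: numeral_2_eq_2)
  hence i: "(a1 + 1) * Nc (a1 + 1) b \<ge> a2 * Nc a1 a2" by (simp only: of_nat_mult[symmetric] of_nat_le_iff)
  have "F a1 a2 0 = (a2 * Nc a1 a2) * (fact a1 * fact b)" using F_formula[of a1 a2] b by (simp add: algebra_simps)
  also have "\<dots> \<le> ((a1 + 1) * Nc (a1 + 1) b) * (fact a1 * fact b)" using i by (rule mult_right_mono) simp
  also have "\<dots> = F (a1 + 1) (a2 - 1) 0" using F_formula[of "a1 + 1" b] b by (simp add: algebra_simps)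
  finally show ?thesis .
qed


end
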